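(* Let $p\neq2$ and let $A=\mathbb Z[S]$ be a commutative polynomial ring over a set $S$. Let $f_1,\dots,f_r$ be distinct nonzero elements of $A$ with $f_i\ne -f_j$ for all $i\ne j$. Then the elements $\langle f_1\rangle,\dots,\langle f_r\rangle$ of $X(A)$ are $\mathbb Z$-linearly independent.
   Context: For a commutative ring $B$, $V(b_0,b_1,\dots)=p(0,b_0,b_1,\dots)$ on $B^{\mathbb N_0}$, $\langle b\rangle=(b,b^p,b^{p^2},\dots)$, and $X(B)$ is the closed subgroup of $B^{\mathbb N_0}$ (product topology) generated by $\{V^n\langle b\rangle\mid n\ge0, b\in B\}$. *)

theory Defs
  imports "HOL-Library.Poly_Mapping" "HOL-Computational_Algebra.Primes"
begin

text \<open>Sequences in B^{N_0} are functions nat => B; the group law is componentwise addition.\<close>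

definition Vop :: "nat \<Rightarrow> (nat \<Rightarrow> 'a::comm_ring_1) \<Rightarrow> nat \<Rightarrow> 'a" where
  "Vop p x = (\<lambda>k. if k = 0 then 0 else of_nat p * x (k - 1))"

definition teich :: "nat \<Rightarrow> 'a::comm_ring_1 \<Rightarrow> nat \<Rightarrow> 'a" where
  "teich p b = (\<lambda>k. b ^ (p ^ k))"

inductive_set Xgen :: "nat \<Rightarrow> (nat \<Rightarrow> 'a::comm_ring_1) set" for p :: nat where
  zero: "(\<lambda>k. 0) \<in> Xgen p"
| gen: "(Vop p ^^ n) (teich p b) \<in> Xgen p"
| diff: "x \<in> Xgen p \<Longrightarrow> y \<in> Xgen p \<Longrightarrow> (\<lambda>k. x k - y k) \<in> Xgen p"

text \<open>Closure in the product topology (B discrete): agreement on every finite initial segment.\<close>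
definition Xgrp :: "nat \<Rightarrow> (nat \<Rightarrow> 'a::comm_ring_1) set" where
  "Xgrp p = {x. \<forall>N. \<exists>y\<in>Xgen p. \<forall>k<N. x k = y k}"

text \<open>Z[S] for S the (arbitrary) type 's: monoid algebra of monomials ('s =>0 nat) over int.\<close>
type_synonym 's intpoly = "('s \<Rightarrow>\<^sub>0 nat) \<Rightarrow>\<^sub>0 int"

end

theory Submission
  imports Defs "HOL-Computational_Algebra.Polynomial"
begin


definition ev :: "('m::monoid_add \<Rightarrow> int) \<Rightarrow> ('m \<Rightarrow>\<^sub>0 int) \<Rightarrow> int" where
  "ev \<chi> f = (\<Sum>m\<in>Poly_Mapping.keys f. Poly_Mapping.lookup f m * \<chi> m)"

lemma ev_superset:
  assumes "finite A" "Poly_Mapping.keys f \<subseteq> A"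
  shows "ev \<chi> f = (\<Sum>m\<in>A. Poly_Mapping.lookup f m * \<chi> m)"
  unfolding ev_def
  by (rule sum.mono_neutral_left) (use assms in \<open>auto simp: in_keys_iff\<close>)

lemma ev_add: "ev \<chi> (f + g) = ev \<chi> f + ev \<chi> g"
proof -
  let ?A = "Poly_Mapping.keys f \<union> Poly_Mapping.keys g"
  have "ev \<chi> (f + g) = (\<Sum>m\<in>?A. Poly_Mapping.lookup (f+g) m * \<chi> m)"
    by (rule ev_superset) (auto simp: keys_add)
  also have "\<dots> = (\<Sum>m\<in>?A. Poly_Mapping.lookup f m * \<chi> m) + (\<Sum>m\<in>?A. Poly_Mapping.lookup g m * \<chi> m)"
    by (simp add: lookup_add distrib_right sum.distrib)
  also have "\<dots> = ev \<chi> f + ev \<chi> g"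
    using ev_superset[of ?A f \<chi>] ev_superset[of ?A g \<chi>] by simp
  finally show ?thesis .
qed

lemma ev_uminus: "ev \<chi> (- f) = - ev \<chi> f"
  by (simp add: ev_def sum_negf keys_minus)

lemma ev_zero[simp]: "ev \<chi> 0 = 0" by (simp add: ev_def)

lemma ev_single: "ev \<chi> (Poly_Mapping.single m a) = a * \<chi> m"
  by (cases "a = 0") (auto simp: ev_def)

lemma update_eq_add: "a \<notin> Poly_Mapping.keys f \<Longrightarrow> Poly_Mapping.update a b f = f + Poly_Mapping.single a b"
  by (rule poly_mapping_eqI) (auto simp: lookup_update lookup_add lookup_single in_keys_iff when_def)

lemma ev_single_mult:
  assumes hom: "\<And>a b. \<chi> (a + b) = \<chi> a * \<chi> b"
  shows "ev \<chi> (Poly_Mapping.single a b * g) = b * \<chi> a * ev \<chi> g"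
proof (induction g rule: update_induct)
  case const
  then show ?case by simp
next
  case (update a' b' g)
  then show ?case
    by (simp add: update_eq_add distrib_left ev_add mult_single ev_single hom algebra_simps)
qed

lemma ev_mult:
  assumes hom: "\<And>a b. \<chi> (a + b) = \<chi> a * \<chi> b"
  shows "ev \<chi> (f * g) = ev \<chi> f * ev \<chi> g"
proof (induction f rule: update_induct)
  case const
  then show ?case by simp
next
  case (update a b f)
  then show ?case
    by (simp add: update_eq_add distrib_right ev_add ev_single_mult[OF hom] ev_single algebra_simps)
qed

lemma ev_one: "\<chi> 0 = 1 \<Longrightarrow> ev \<chi> 1 = 1"
  by (simp flip: single_one add: ev_single)

lemma ev_power:
  assumes "\<And>a b. \<chi> (a + b) = \<chi> a * \<chi> b" "\<chi> 0 = 1"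
  shows "ev \<chi> (f ^ n) = ev \<chi> f ^ n"
  by (induction n) (simp_all add: ev_one ev_mult assms)

lemma ev_of_int: "\<chi> 0 = 1 \<Longrightarrow> ev \<chi> (of_int c) = c"
  by (simp flip: single_of_int add: ev_single)

lemma ev_sum: "ev \<chi> (\<Sum>i\<in>I. h i) = (\<Sum>i\<in>I. ev \<chi> (h i))"
  by (induction I rule: infinite_finite_induct) (simp_all add: ev_add)

lemma ev_diff: "ev \<chi> (f - g) = ev \<chi> f - ev \<chi> g"
  using ev_add[of \<chi> f "-g"] by (simp add: ev_uminus)



lemma key_nonvanish:
  fixes G :: "'s intpoly set"
  assumes finG: "finite G" and nz: "0 \<notin> G"
  shows "\<exists>\<chi>. (\<forall>a b. \<chi> (a + b) = \<chi> a * \<chi> b) \<and> \<chi> 0 = 1 \<and> (\<forall>g\<in>G. ev \<chi> g \<noteq> 0)"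
proof -
  define Ms where "Ms = \<Union> (Poly_Mapping.keys ` G)"
  have finMs: "finite Ms" unfolding Ms_def using finG by simp
  define Vs where "Vs = \<Union> (Poly_Mapping.keys ` Ms)"
  have finVs: "finite Vs" unfolding Vs_def using finMs by simp
  obtain idx :: "'s \<Rightarrow> nat" where inj: "inj_on idx Vs"
    using finite_imp_inj_to_nat_seg[OF finVs] by blast
  define \<phi> where "\<phi> T m = (\<Sum>s\<in>Vs. Poly_Mapping.lookup m s * T ^ idx s)" for T :: nat and m :: "'s \<Rightarrow>\<^sub>0 nat"
  define Q where "Q m m' = (\<Sum>s\<in>Vs. monom (int (Poly_Mapping.lookup m s) - int (Poly_Mapping.lookup m' s)) (idx s))"
    for m m' :: "'s \<Rightarrow>\<^sub>0 nat"
  have polyQ: "poly (Q m m') (int T) = int (\<phi> T m) - int (\<phi> T m')" for m m' T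
    by (simp add: Q_def \<phi>_def poly_sum poly_monom sum_subtractf left_diff_distrib)
  have Qnz: "Q m m' \<noteq> 0" if h: "m \<in> Ms" "m' \<in> Ms" "m \<noteq> m'" for m m'
  proof -
    obtain s where s: "Poly_Mapping.lookup m s \<noteq> Poly_Mapping.lookup m' s"
      using h(3) by (auto simp: poly_mapping_eq_iff fun_eq_iff)
    have sV: "s \<in> Vs"
      using s h(1,2) unfolding Vs_def by (cases "Poly_Mapping.lookup m s = 0") (auto simp: in_keys_iff)
    have "coeff (Q m m') (idx s) = (\<Sum>s'\<in>Vs. if idx s' = idx s then int (Poly_Mapping.lookup m s') - int (Poly_Mapping.lookup m' s') else 0)"
      by (simp add: Q_def coeff_sum)
    also have "\<dots> = (\<Sum>s'\<in>Vs. if s' = s then int (Poly_Mapping.lookup m s') - int (Poly_Mapping.lookup m' s') else 0)"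
      by (rule sum.cong) (use inj sV in \<open>auto dest: inj_onD\<close>)
    also have "\<dots> = int (Poly_Mapping.lookup m s) - int (Poly_Mapping.lookup m' s)"
      using finVs sV by simp
    finally show ?thesis using s by auto
  qed
  define R1 where "R1 = (\<Union>(m,m')\<in>{(m,m'). m \<in> Ms \<and> m' \<in> Ms \<and> m \<noteq> m'}. {x. poly (Q m m') x = 0})"
  have "finite R1" unfolding R1_def
    apply (rule finite_UN_I)
     apply (rule finite_subset[of _ "Ms \<times> Ms"]) using finMs apply auto[2]
    using Qnz poly_roots_finite by auto
  then have "finite (int -` R1)" by (rule finite_vimageI) (simp add: inj_on_def)
  then obtain T :: nat where T: "T \<notin> int -` R1"
    using ex_new_if_finite[OF infinite_UNIV_nat] by blast
  have \<phi>inj: "inj_on (\<phi> T) Ms"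
  proof (rule inj_onI, rule ccontr)
    fix m m' assume "m \<in> Ms" "m' \<in> Ms" "\<phi> T m = \<phi> T m'" "m \<noteq> m'"
    then have "int T \<in> R1" unfolding R1_def using polyQ[of m m' T] by auto
    then show False using T by simp
  qed
  have \<phi>add: "\<phi> T (a + b) = \<phi> T a + \<phi> T b" for a b
    by (simp add: \<phi>_def lookup_add sum.distrib distrib_right)
  have \<phi>0: "\<phi> T 0 = 0" by (simp add: \<phi>_def)
  define P where "P g = (\<Sum>m\<in>Poly_Mapping.keys g. monom (Poly_Mapping.lookup g m) (\<phi> T m))" for g :: "'s intpoly"
  have Pnz: "P g \<noteq> 0" if "g \<in> G" for g
  proof -
    have "g \<noteq> 0" using that nz by auto
    then obtain m0 where m0: "m0 \<in> Poly_Mapping.keys g" by fastforce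
    have sub: "Poly_Mapping.keys g \<subseteq> Ms" using that unfolding Ms_def by auto
    have "coeff (P g) (\<phi> T m0) = (\<Sum>m\<in>Poly_Mapping.keys g. if \<phi> T m = \<phi> T m0 then Poly_Mapping.lookup g m else 0)"
      by (simp add: P_def coeff_sum)
    also have "\<dots> = (\<Sum>m\<in>Poly_Mapping.keys g. if m = m0 then Poly_Mapping.lookup g m else 0)"
      by (rule sum.cong) (use \<phi>inj sub m0 in \<open>auto dest: inj_onD\<close>)
    also have "\<dots> = Poly_Mapping.lookup g m0" using m0 by simp
    finally show ?thesis using m0 by (auto simp: in_keys_iff)
  qed
  define R2 where "R2 = (\<Union>g\<in>G. {x. poly (P g) x = 0})"
  have "finite R2" unfolding R2_def using finG Pnz poly_roots_finite by blast
  then obtain B :: int where B: "B \<notin> R2"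
    using ex_new_if_finite[OF infinite_UNIV_int] by blast
  define \<chi> where "\<chi> m = B ^ \<phi> T m" for m
  have "ev \<chi> g = poly (P g) B" for g
    by (simp add: ev_def P_def poly_sum poly_monom \<chi>_def)
  then have "\<forall>g\<in>G. ev \<chi> g \<noteq> 0" using B unfolding R2_def by auto
  moreover have "\<forall>a b. \<chi> (a + b) = \<chi> a * \<chi> b" by (simp add: \<chi>_def \<phi>add power_add)
  moreover have "\<chi> 0 = 1" by (simp add: \<chi>_def \<phi>0)
  ultimately show ?thesis by blast
qed



lemma grow: "(L::int) \<ge> 0 \<Longrightarrow> (L+1)^n * L \<ge> L^n * (L + int n)"
proof (induction n)
  case 0 then show ?case by simp
next
  case (Suc n)
  have "(L+1)^Suc n * L = (L+1) * ((L+1)^n * L)" by simp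
  also have "\<dots> \<ge> (L+1) * (L^n * (L + int n))"
    using Suc by (intro mult_left_mono) auto
  finally have a: "(L+1)^Suc n * L \<ge> (L+1) * (L^n * (L + int n))" .
  have b: "(L+1) * (L^n * (L + int n)) \<ge> L^Suc n * (L + int (Suc n))"
  proof -
    have "L^n \<ge> 0" using Suc by simp
    then have "L^n * (L + int n) \<ge> L^n * L" using Suc by (intro mult_left_mono) auto
    then show ?thesis by (simp add: algebra_simps)
  qed
  from a b show ?case by linarith
qed

lemma exists_big:
  assumes L: "(L::int) \<ge> 0" and p: "(p::nat) \<ge> 2"
  shows "\<exists>k. (L+1)^(p^k) > C * L^(p^k)"
proof (cases "L = 0")
  case True then show ?thesis by (intro exI[of _ 0]) simp
next
  case False
  then have Lp: "L > 0" using L by simp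
  define k where "k = nat (C*L) + 1"
  have "k < 2^k" by (rule less_exp)
  also have "(2::nat)^k \<le> p^k" using p by (intro power_mono) auto
  finally have "int (p^k) > C * L" unfolding k_def by linarith
  define n where "n = p^k"
  have gn: "(L+1)^n * L \<ge> L^n * (L + int n)" using grow L by blast
  have "L + int n > C * L" using \<open>int (p^k) > C * L\<close> Lp unfolding n_def by linarith
  then have "L^n * (L + int n) > L^n * (C * L)" using Lp by (intro mult_strict_left_mono) auto
  with gn have "(L+1)^n * L > (C * L^n) * L" by (simp add: algebra_simps)
  then have "(L+1)^n > C * L^n" using Lp by (meson mult_less_cancel_right_pos)
  then show ?thesis unfolding n_def by blast
qed

lemma int_indep:
  fixes a c :: "'i \<Rightarrow> int" and p :: nat
  assumes "finite I" and nz: "\<forall>i\<in>I. a i \<noteq> 0"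
    and dist: "\<forall>i\<in>I. \<forall>j\<in>I. i \<noteq> j \<longrightarrow> \<bar>a i\<bar> \<noteq> \<bar>a j\<bar>"
    and p: "p \<ge> 2"
  shows "S \<subseteq> I \<Longrightarrow> (\<forall>k. (\<Sum>i\<in>S. c i * a i ^ (p^k)) = 0) \<Longrightarrow> \<forall>i\<in>S. c i = 0"
proof -
  have "finite S \<longrightarrow> S \<subseteq> I \<longrightarrow> (\<forall>k. (\<Sum>i\<in>S. c i * a i ^ (p^k)) = 0) \<longrightarrow> (\<forall>i\<in>S. c i = 0)"
  proof (rule impI)
    assume "finite S"
    then show "S \<subseteq> I \<longrightarrow> (\<forall>k. (\<Sum>i\<in>S. c i * a i ^ (p^k)) = 0) \<longrightarrow> (\<forall>i\<in>S. c i = 0)"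
    proof (induction S rule: finite_ranking_induct[where f = "\<lambda>i. \<bar>a i\<bar>"])
      case empty then show ?case by simp
    next
      case (insert x S)
      show ?case
      proof (intro impI)
        assume sub: "insert x S \<subseteq> I" and H: "\<forall>k. (\<Sum>i\<in>insert x S. c i * a i ^ (p^k)) = 0"
        show "\<forall>i\<in>insert x S. c i = 0"
        proof (cases "x \<in> S")
          case True then show ?thesis using insert sub H by (simp add: insert_absorb)
        next
          case xS: False
          define L where "L = \<bar>a x\<bar> - 1"
          have L0: "L \<ge> 0" using nz sub unfolding L_def by auto
          have le: "\<bar>a y\<bar> \<le> L" if "y \<in> S" for y
            using insert.hyps(2)[OF that] dist sub that xS unfolding L_def by fastforce
          define C where "C = (\<Sum>y\<in>S. \<bar>c y\<bar>)"
          have cx: "c x = 0"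
          proof (rule ccontr)
            assume cx: "c x \<noteq> 0"
            obtain k where k: "(L+1)^(p^k) > C * L^(p^k)" using exists_big[OF L0 p] by blast
            define n where "n = p^k"
            have "c x * a x ^ n = - (\<Sum>y\<in>S. c y * a y ^ n)"
              using H[rule_format, of k] xS insert.hyps(1) unfolding n_def by simp
            then have "\<bar>c x\<bar> * \<bar>a x\<bar> ^ n = \<bar>\<Sum>y\<in>S. c y * a y ^ n\<bar>"
              by (metis abs_minus_cancel abs_mult power_abs)
            also have "\<dots> \<le> (\<Sum>y\<in>S. \<bar>c y * a y ^ n\<bar>)" by (rule sum_abs)
            also have "\<dots> \<le> (\<Sum>y\<in>S. \<bar>c y\<bar> * L ^ n)"
            proof (rule sum_mono)
              fix y assume "y \<in> S"
              then have "\<bar>a y\<bar> ^ n \<le> L ^ n" using le by (intro power_mono) auto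
              then show "\<bar>c y * a y ^ n\<bar> \<le> \<bar>c y\<bar> * L ^ n"
                by (simp add: abs_mult power_abs mult_left_mono)
            qed
            also have "\<dots> = C * L^n" by (simp add: C_def sum_distrib_right)
            finally have "\<bar>c x\<bar> * \<bar>a x\<bar> ^ n \<le> C * L ^ n" .
            moreover have "\<bar>a x\<bar> ^ n \<le> \<bar>c x\<bar> * \<bar>a x\<bar> ^ n"
              proof -
              have "1 \<le> \<bar>c x\<bar>" using cx by linarith
              moreover have "0 \<le> \<bar>a x\<bar> ^ n" by simp
              ultimately show ?thesis using mult_right_mono[of 1 "\<bar>c x\<bar>" "\<bar>a x\<bar> ^ n"] by simp
            qed
            moreover have "\<bar>a x\<bar> = L + 1" unfolding L_def by simp
            ultimately show False using k unfolding n_def by simp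
          qed
          have "\<forall>k. (\<Sum>i\<in>S. c i * a i ^ (p^k)) = 0"
            using H xS insert.hyps(1) cx by simp
          then have "\<forall>i\<in>S. c i = 0" using insert.IH sub by simp
          then show ?thesis using cx by simp
        qed
      qed
    qed
  qed
  then show "S \<subseteq> I \<Longrightarrow> (\<forall>k. (\<Sum>i\<in>S. c i * a i ^ (p^k)) = 0) \<Longrightarrow> \<forall>i\<in>S. c i = 0"
    using assms(1) finite_subset by blast
qed


theorem lemma4p2:
  fixes p r :: nat and f :: "nat \<Rightarrow> 's intpoly"
  assumes "prime p" and "p \<noteq> 2"
    and "inj_on f {..<r}"
    and "\<forall>i<r. f i \<noteq> 0"
    and "\<forall>i<r. \<forall>j<r. i \<noteq> j \<longrightarrow> f i \<noteq> - f j"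
  shows "(\<forall>i<r. teich p (f i) \<in> (Xgrp p :: (nat \<Rightarrow> 's intpoly) set))
    \<and> (\<forall>c :: nat \<Rightarrow> int.
          (\<forall>k. (\<Sum>i<r. of_int (c i) * teich p (f i) k) = 0) \<longrightarrow> (\<forall>i<r. c i = 0))"
proof (intro conjI allI impI)
  fix i assume "i < r"
  have "(Vop p ^^ 0) (teich p (f i)) \<in> Xgen p" by (rule Xgen.gen)
  then show "teich p (f i) \<in> Xgrp p" unfolding Xgrp_def by auto
next
  fix c :: "nat \<Rightarrow> int" and i0 :: nat
  assume H: "\<forall>k. (\<Sum>i<r. of_int (c i) * teich p (f i) k) = 0" and i0: "i0 < r"
  have p2: "p \<ge> 2" using assms(1) prime_ge_2_nat by blast
  define G where "G = f ` {..<r} \<union> (\<lambda>(i,j). f i - f j) ` {(i,j). i < r \<and> j < r \<and> i \<noteq> j}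
     \<union> (\<lambda>(i,j). f i + f j) ` {(i,j). i < r \<and> j < r \<and> i \<noteq> j}"
  have fin: "finite {(i,j). i < r \<and> j < r \<and> (i::nat) \<noteq> j}"
    by (rule finite_subset[of _ "{..<r} \<times> {..<r}"]) auto
  have "finite G" unfolding G_def using fin by auto
  moreover have "0 \<notin> G"
  proof
    assume "0 \<in> G"
    then show False unfolding G_def
    proof (elim UnE imageE)
      fix i assume "0 = f i" "i \<in> {..<r}" then show False using assms(4) by auto
    next
      fix x assume "0 = (\<lambda>(i,j). f i - f j) x" "x \<in> {(i,j). i < r \<and> j < r \<and> i \<noteq> j}"
      then show False using assms(3) by (auto simp: inj_on_def)
    next
      fix x assume "0 = (\<lambda>(i,j). f i + f j) x" "x \<in> {(i,j). i < r \<and> j < r \<and> i \<noteq> j}"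
      then show False using assms(5) by (auto simp: add_eq_0_iff)
    qed
  qed
  ultimately obtain \<chi> where hom: "\<And>a b. \<chi> (a + b) = \<chi> a * \<chi> b" and h0: "\<chi> 0 = 1"
    and nzG: "\<forall>g\<in>G. ev \<chi> g \<noteq> 0"
    using key_nonvanish by blast
  define a where "a i = ev \<chi> (f i)" for i
  have anz: "\<forall>i\<in>{..<r}. a i \<noteq> 0" using nzG unfolding a_def G_def by auto
  have adist: "\<forall>i\<in>{..<r}. \<forall>j\<in>{..<r}. i \<noteq> j \<longrightarrow> \<bar>a i\<bar> \<noteq> \<bar>a j\<bar>"
  proof (intro ballI impI)
    fix i j assume ij: "i \<in> {..<r}" "j \<in> {..<r}" "i \<noteq> j"
    have "f i - f j \<in> G" "f i + f j \<in> G" unfolding G_def using ij by force+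
    then have "ev \<chi> (f i - f j) \<noteq> 0" "ev \<chi> (f i + f j) \<noteq> 0" using nzG by auto
    then have "a i \<noteq> a j" "a i \<noteq> - a j" unfolding a_def by (auto simp: ev_diff ev_add)
    then show "\<bar>a i\<bar> \<noteq> \<bar>a j\<bar>" by (auto simp: abs_eq_iff)
  qed
  have "\<forall>k. (\<Sum>i\<in>{..<r}. c i * a i ^ (p^k)) = 0"
  proof
    fix k
    have "0 = ev \<chi> (\<Sum>i<r. of_int (c i) * teich p (f i) k)" using H by simp
    also have "\<dots> = (\<Sum>i<r. c i * a i ^ (p^k))"
      by (simp add: ev_sum ev_mult[OF hom] ev_of_int[of \<chi>, OF h0] ev_power[of \<chi>, OF hom h0] teich_def a_def)
    finally show "(\<Sum>i\<in>{..<r}. c i * a i ^ (p^k)) = 0" by simp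
  qed
  then have "\<forall>i\<in>{..<r}. c i = 0" using int_indep[OF _ anz adist p2] by blast
  then show "c i0 = 0" using i0 by simp
qed
end
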